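(* Let $\mathbb{H}=\{z\in\mathbb{C}:\operatorname{Im}z>0\}$ and $p\ge1$. For all $z_1,z_2\in\mathbb{H}$, \[ b_{\mathbb{H},p}(z_1,z_2)\le\frac{|z_1-z_2|}{\max\{\operatorname{Im}(z_1),\operatorname{Im}(z_2)\}}. \]
   Context: For $z_1,z_2\in\mathbb{H}$ and $p\ge1$, $b_{\mathbb{H},p}(z_1,z_2)=\sup_{t\in\mathbb{R}}\frac{|z_1-z_2|}{\sqrt[p]{|z_1-t|^p+|t-z_2|^p}}$. *)

theory Defs
  imports "HOL-Analysis.Analysis"
begin

definition upper_half_plane :: "complex set" where
  "upper_half_plane = {z. Im z > 0}"

definition b_H :: "real \<Rightarrow> complex \<Rightarrow> complex \<Rightarrow> real" where
  "b_H p z1 z2 = (SUP t\<in>(UNIV::real set).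
      cmod (z1 - z2) / ((cmod (z1 - of_real t) powr p + cmod (of_real t - z2) powr p) powr (1 / p)))"

end

theory Submission
  imports Defs
begin

lemma powr_sum_ge:
  fixes a b p :: real
  assumes "a > 0" "b \<ge> 0" "p \<ge> 1"
  shows "a \<le> (a powr p + b powr p) powr (1/p)"
proof -
  have "a = (a powr p) powr (1/p)" using assms by (simp add: powr_powr)
  also have "\<dots> \<le> (a powr p + b powr p) powr (1/p)"
    using assms by (intro powr_mono2) auto
  finally show ?thesis .
qed

theorem proposition3p27:
  fixes p :: real and z1 z2 :: complex
  assumes "p \<ge> 1" and "z1 \<in> upper_half_plane" and "z2 \<in> upper_half_plane"
  shows "b_H p z1 z2 \<le> cmod (z1 - z2) / max (Im z1) (Im z2)"
  unfolding b_H_def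
proof (rule cSUP_least)
  show "(UNIV::real set) \<noteq> {}" by simp
next
  fix t :: real
  have i1: "Im z1 > 0" and i2: "Im z2 > 0" using assms(2,3) by (auto simp: upper_half_plane_def)
  define a where "a = cmod (z1 - of_real t)"
  define b where "b = cmod (of_real t - z2)"
  have a1: "Im z1 \<le> a" unfolding a_def using abs_Im_le_cmod[of "z1 - of_real t"] by simp
  have b1: "Im z2 \<le> b" unfolding b_def using abs_Im_le_cmod[of "of_real t - z2"] by simp
  have "a \<le> (a powr p + b powr p) powr (1/p)"
    using powr_sum_ge[of a b p] a1 b1 i1 i2 assms(1) by auto
  moreover have "b \<le> (a powr p + b powr p) powr (1/p)"
    using powr_sum_ge[of b a p] a1 b1 i1 i2 assms(1) by (auto simp: add.commute)
  ultimately have D: "max (Im z1) (Im z2) \<le> (a powr p + b powr p) powr (1/p)"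
    using a1 b1 by linarith
  have M: "max (Im z1) (Im z2) > 0" using i1 by linarith
  show "cmod (z1 - z2) / ((cmod (z1 - of_real t) powr p + cmod (of_real t - z2) powr p) powr (1 / p))
        \<le> cmod (z1 - z2) / max (Im z1) (Im z2)"
    unfolding a_def[symmetric] b_def[symmetric]
  proof (rule divide_left_mono[OF D])
    show "0 \<le> cmod (z1 - z2)" by simp
    have "0 < (a powr p + b powr p) powr (1/p)" using M D by linarith
    then show "0 < (a powr p + b powr p) powr (1/p) * max (Im z1) (Im z2)"
      using M by (rule mult_pos_pos)
  qed
qed

end
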